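(* Let $k\ge 1$ and $s\ge 1$ be integers with $s\le k$, and let $t$ be an integer. Then $$k\,\sigma_{k}^{(0)}(t;s)=\sum_{d\mid k}d\,\sigma^{(1)}_{d}(t;s),$$ with the convention $\sigma^{(1)}_{d}(t;s)=0$ if $s>d$. Equivalently, by Möbius inversion, $$k\,\sigma_{k}^{(1)}(t;s)=\sum_{d\mid k}\mu\!\left(\frac{k}{d}\right)d\,\sigma_{d}^{(0)}(t;s),$$ with the analogous convention $\sigma^{(0)}_d(t;s)=0$ if $s>d$.
   Context: For a positive integer $m$, $(q)_m=(1-q)\cdots(1-q^m)$, $(q)_0=1$. For integers $b\ge 0$, $n\ge1$ and $1\le s\le n$, let $R^{(b)}_{n,s}(q)=\sum_{t=0}^{n-1}\sigma^{(b)}_n(t;s)q^t$ be the remainder of $\frac{1}{n^b}(q)_{n-1}^{\,b}(q)_{s-1}$ upon division by $1-q^n$; the values $\sigma^{(b)}_n(t;s)$ are extended to all integers $t$ by $n$-periodicity. $\mu$ is the Möbius function. *)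

theory Defs
  imports "HOL-Computational_Algebra.Computational_Algebra"
begin

definition qpoch :: "nat \<Rightarrow> rat poly" where
  "qpoch m = (\<Prod>i\<in>{1..m}. 1 - monom 1 i)"

definition Rpoly :: "nat \<Rightarrow> nat \<Rightarrow> nat \<Rightarrow> rat poly" where
  "Rpoly b n s = smult (1 / (of_nat n) ^ b) (qpoch (n - 1) ^ b * qpoch (s - 1)) mod (1 - monom 1 n)"

definition sigma :: "nat \<Rightarrow> nat \<Rightarrow> int \<Rightarrow> nat \<Rightarrow> rat" where
  "sigma b n t s = coeff (Rpoly b n s) (nat (t mod int n))"

definition moebius :: "nat \<Rightarrow> int" where
  "moebius n = (if n = 0 then 0 else if squarefree n then (-1) ^ card (prime_factors n) else 0)"

end

theory Submission
  imports Defs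
begin


lemma roots_zero:
  fixes p :: "complex poly"
  assumes "finite A" "degree p < card A" "\<And>a. a \<in> A \<Longrightarrow> poly p a = 0"
  shows "p = 0"
proof (rule ccontr)
  assume p: "p \<noteq> 0"
  have "A \<subseteq> {x. poly p x = 0}" using assms(3) by auto
  hence "card A \<le> card {x. poly p x = 0}" using poly_roots_finite[OF p] by (rule card_mono[rotated])
  also have "\<dots> \<le> degree p" by (rule card_poly_roots_bound[OF p])
  finally show False using assms(2) by simp
qed

lemma prim_prod:
  fixes z :: complex
  assumes e: "e > 0" and ze: "z ^ e = 1" and prim: "\<And>i. 0 < i \<Longrightarrow> i < e \<Longrightarrow> z ^ i \<noteq> 1"
  shows "(\<Prod>i\<in>{1..e-1}. 1 - z ^ i) = of_nat e"
proof -
  define P where "P = (\<Prod>i\<in>{1..e-1}. [:- (z ^ i), 1:])"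
  define G where "G = (\<Sum>j<e. monom (1::complex) j)"
  have "degree P = (\<Sum>i\<in>{1..e-1}. degree [:- (z ^ i), 1:])" unfolding P_def
    by (rule degree_prod_sum_eq) simp
  hence degP: "degree P = e - 1" by simp
  have "lead_coeff P = 1" unfolding P_def lead_coeff_prod by simp
  hence lcP: "coeff P (e - 1) = 1" using degP by simp
  have degG: "degree G \<le> e - 1" unfolding G_def
    by (intro degree_sum_le) (use e in \<open>auto simp: degree_monom_le intro: order.trans[OF degree_monom_le]\<close>)
  have lcG: "coeff G (e - 1) = 1" unfolding G_def using e
    by (simp add: coeff_sum coeff_monom)
  have "P - G = 0"
  proof (rule ccontr)
  assume False: "P - G \<noteq> 0"
  have "P - G = 0"
  proof (rule roots_zero)
    show "finite ((\<lambda>i. z ^ i) ` {1..e-1})" by simp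
    have inj: "inj_on (\<lambda>i. z ^ i) {1..e-1}"
    proof (rule inj_onI)
      fix i j assume ij: "i \<in> {1..e-1}" "j \<in> {1..e-1}" "z ^ i = z ^ j"
      show "i = j"
      proof (rule ccontr)
        assume "i \<noteq> j"
        then consider "i < j" | "j < i" by linarith
        thus False
        proof cases
          case 1
          have "z ^ j = z ^ i * z ^ (j - i)" using 1 by (simp add: power_add[symmetric])
          hence "z ^ i * z ^ (j - i) = z ^ i * 1" using ij(3) by simp
          moreover have "z ^ i \<noteq> 0" using ze e by (metis power_eq_0_iff zero_neq_one power_0_left)
          ultimately have "z ^ (j - i) = 1" by (metis mult_left_cancel)
          moreover have "j - i < e" using 1 ij e by (simp; arith)
          ultimately show False using prim[of "j - i"] 1 by auto
        next
          case 2
          have "z ^ i = z ^ j * z ^ (i - j)" using 2 by (simp add: power_add[symmetric])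
          hence "z ^ j * z ^ (i - j) = z ^ j * 1" using ij(3) by simp
          moreover have "z ^ j \<noteq> 0" using ze e by (metis power_eq_0_iff zero_neq_one power_0_left)
          ultimately have "z ^ (i - j) = 1" by (metis mult_left_cancel)
          moreover have "i - j < e" using 2 ij e by (simp; arith)
          ultimately show False using prim[of "i - j"] 2 by auto
        qed
      qed
    qed
    hence card: "card ((\<lambda>i. z ^ i) ` {1..e-1}) = e - 1" by (simp add: card_image)
    show "degree (P - G) < card ((\<lambda>i. z ^ i) ` {1..e-1})"
    proof -
      have le: "degree (P - G) \<le> e - 1" using degP degG by (intro degree_diff_le) auto
      have "coeff (P - G) (e - 1) = 0" using lcP lcG by simp
      hence "degree (P - G) \<noteq> e - 1" using False by (metis leading_coeff_0_iff)
      thus ?thesis using le card by simp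
    qed
    fix a assume "a \<in> (\<lambda>i. z ^ i) ` {1..e-1}"
    then obtain i where i: "i \<in> {1..e-1}" "a = z ^ i" by auto
    have "i < e" "0 < i" using i e by auto
    hence a1: "a \<noteq> 1" using prim[of i] i by auto
    have ae: "a ^ e = 1" using ze i by (metis power_mult power_mult_distrib mult.commute power_one)
    have "poly P a = 0" unfolding P_def poly_prod using i by (auto intro!: prod_zero)
    moreover have "poly G a = 0" unfolding G_def using a1 ae
      by (simp add: poly_sum poly_monom geometric_sum)
    ultimately show "poly (P - G) a = 0" by simp
  qed
  thus False using False by simp
  qed
  hence "P = G" by simp
  hence "poly P 1 = poly G 1" by simp
  thus ?thesis unfolding P_def G_def poly_prod poly_sum by (simp add: poly_monom)
qed



definition h :: "rat poly \<Rightarrow> complex poly" where "h p = map_poly of_rat p"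

lemma h_add: "h (p + q) = h p + h q"
  unfolding h_def by (rule poly_eqI) (simp add: coeff_map_poly of_rat_add)
lemma h_diff: "h (p - q) = h p - h q"
  unfolding h_def by (rule poly_eqI) (simp add: coeff_map_poly of_rat_diff)
lemma h_mult: "h (p * q) = h p * h q"
  unfolding h_def by (rule poly_eqI) (simp add: coeff_map_poly coeff_mult of_rat_sum of_rat_mult)
lemma h_1: "h 1 = 1" unfolding h_def by simp
lemma h_monom: "h (monom c n) = monom (of_rat c) n" unfolding h_def by (simp add: map_poly_monom)
lemma h_0: "h 0 = 0" unfolding h_def by simp
lemma h_const: "h [:c:] = [:of_rat c:]" unfolding h_def by (rule poly_eqI) (simp add: coeff_map_poly coeff_pCons split: nat.split)
lemma h_sum: "h (sum f A) = (\<Sum>x\<in>A. h (f x))"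
  by (induct A rule: infinite_finite_induct) (simp_all add: h_add h_0)
lemma h_prod: "h (prod f A) = (\<Prod>x\<in>A. h (f x))"
  by (induct A rule: infinite_finite_induct) (simp_all add: h_mult h_1)
lemma h_degree: "degree (h p) = degree p" unfolding h_def by (rule degree_map_poly) simp
lemma h_eq0: "h p = 0 \<longleftrightarrow> p = 0" unfolding h_def by (rule map_poly_eq_0_iff) auto

definition M :: "nat \<Rightarrow> rat poly" where "M n = 1 - monom 1 n"
definition S :: "nat \<Rightarrow> nat \<Rightarrow> rat poly" where "S k d = (\<Sum>i<k div d. monom 1 (d * i))"
definition F :: "nat \<Rightarrow> rat poly" where "F k = (\<Sum>d | d dvd k. qpoch (d - 1) * S k d)"

lemma poly_qpoch: "poly (h (qpoch n)) z = (\<Prod>i\<in>{1..n}. 1 - z ^ i)"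
  unfolding qpoch_def h_prod by (simp add: poly_prod h_diff h_1 h_monom poly_monom)
lemma poly_S: "poly (h (S k d)) z = (\<Sum>i<k div d. (z ^ d) ^ i)"
  unfolding S_def h_sum by (simp add: poly_sum h_monom poly_monom power_mult)
lemma poly_M: "poly (h (M n)) z = 1 - z ^ n"
  unfolding M_def by (simp add: h_diff h_1 h_monom poly_monom)

lemma degree_M: "n \<ge> 1 \<Longrightarrow> degree (M n) = n"
proof -
  assume n: "n \<ge> 1"
  have "1 - monom (1::rat) n = 1 + (- monom 1 n)" by simp
  also have "degree \<dots> = degree (- monom (1::rat) n)"
    using n by (intro degree_add_eq_right) (simp add: degree_monom_eq)
  finally show ?thesis unfolding M_def by (simp add: degree_monom_eq)
qed

lemma evalF:
  fixes z :: complex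
  assumes k: "k > 0" and zk: "z ^ k = 1"
  shows "poly (h (F k)) z = of_nat k"
proof -
  define e where "e = (LEAST e. 0 < e \<and> z ^ e = 1)"
  have ex: "\<exists>e. 0 < e \<and> z ^ e = 1" using k zk by blast
  have e: "0 < e" "z ^ e = 1" using LeastI_ex[OF ex] unfolding e_def by auto
  have emin: "\<And>i. 0 < i \<Longrightarrow> i < e \<Longrightarrow> z ^ i \<noteq> 1"
    using not_less_Least unfolding e_def by blast
  have ek: "e dvd k"
  proof -
    have "z ^ k = z ^ (e * (k div e) + k mod e)" by simp
    also have "\<dots> = (z ^ e) ^ (k div e) * z ^ (k mod e)" by (simp only: power_add power_mult)
    finally have "z ^ k = (z ^ e) ^ (k div e) * z ^ (k mod e)" .
    hence "z ^ (k mod e) = 1" using e zk by simp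
    moreover have "k mod e < e" using e(1) by simp
    ultimately have "k mod e = 0" using emin[of "k mod e"] by (cases "k mod e = 0") auto
    thus ?thesis by auto
  qed
  define g where "g d = (\<Prod>i\<in>{1..d - 1}. 1 - z ^ i) * (\<Sum>i<k div d. (z ^ d) ^ i)" for d
  have Fz: "poly (h (F k)) z = (\<Sum>d | d dvd k. g d)"
    unfolding F_def h_sum g_def by (simp add: poly_sum h_mult poly_qpoch poly_S)
  have g0: "g d = 0" if d: "d dvd k" "d \<noteq> e" for d
  proof (cases "z ^ d = 1")
    case True
    have dpos: "d > 0" using d k by (auto intro: Nat.gr0I)
    have "e \<le> d" unfolding e_def using True dpos by (intro Least_le) auto
    hence "e \<in> {1..d - 1}" using d(2) e(1) by auto
    hence "(\<Prod>i\<in>{1..d - 1}. 1 - z ^ i) = 0" using e(2) by (intro prod_zero) auto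
    thus ?thesis unfolding g_def by simp
  next
    case False
    have "(z ^ d) ^ (k div d) = z ^ (d * (k div d))" by (simp only: power_mult)
    also have "\<dots> = 1" by (simp only: dvd_mult_div_cancel[OF d(1)] zk)
    finally have "(z ^ d) ^ (k div d) = 1" .
    hence "(\<Sum>i<k div d. (z ^ d) ^ i) = 0" using False by (simp add: geometric_sum)
    thus ?thesis unfolding g_def by simp
  qed
  have ge: "g e = of_nat k"
  proof -
    have "g e = of_nat e * of_nat (k div e)" unfolding g_def using prim_prod[OF e emin] e by simp
    also have "\<dots> = of_nat k" by (simp only: of_nat_mult[symmetric] dvd_mult_div_cancel[OF ek])
    finally show ?thesis .
  qed
  have fin: "finite {d. d dvd k}" using k by simp
  have "(\<Sum>d | d dvd k. g d) = g e + (\<Sum>d \<in> {d. d dvd k} - {e}. g d)"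
    using ek fin by (subst sum.remove[of _ e]) auto
  also have "(\<Sum>d \<in> {d. d dvd k} - {e}. g d) = 0" using g0 by (intro sum.neutral) auto
  finally show ?thesis using Fz ge by simp
qed



lemma M_nz: "n \<ge> 1 \<Longrightarrow> M n \<noteq> 0"
  using degree_M[of n] by auto

lemma L2:
  assumes k: "k > 0"
  shows "M k dvd (F k - [:of_nat k:])"
proof -
  define G where "G = F k - [:of_nat k:]"
  define R where "R = G mod M k"
  have Mnz: "M k \<noteq> 0" using M_nz k by simp
  have decomp: "G = G div M k * M k + R" unfolding R_def by simp
  have roots: "poly (h R) z = 0" if z: "z \<in> {z. z ^ k = 1}" for z
  proof -
    have "poly (h G) z = 0" unfolding G_def using evalF[OF k] z
      by (simp add: h_diff h_const)
    moreover have "poly (h (M k)) z = 0" using z by (simp add: poly_M)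
    moreover have "h G = h (G div M k) * h (M k) + h R"
      by (subst decomp) (simp add: h_add h_mult)
    ultimately show ?thesis by (metis add_0 mult_zero_right poly_add poly_mult)
  qed
  have "R = 0"
  proof (rule ccontr)
    assume Rnz: "R \<noteq> 0"
    have "degree R < degree (M k)" using degree_mod_less'[OF Mnz] Rnz unfolding R_def by simp
    hence "degree (h R) < card {z::complex. z ^ k = 1}"
      using degree_M[of k] k card_roots_unity_eq[OF k] by (simp add: h_degree)
    moreover have "finite {z::complex. z ^ k = 1}" using k by (intro finite_roots_unity) simp
    ultimately have "h R = 0" using roots by (intro roots_zero) auto
    thus False using Rnz h_eq0 by simp
  qed
  thus ?thesis unfolding R_def G_def by (simp add: mod_eq_0_iff_dvd)
qed

lemma MS_aux: "(1 - monom (1::rat) d) * (\<Sum>i<m. monom 1 (d * i)) = 1 - monom 1 (d * m)"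
proof (induct m)
  case 0 thus ?case by simp
next
  case (Suc m)
  have "(1 - monom (1::rat) d) * (\<Sum>i<Suc m. monom 1 (d * i))
      = (1 - monom 1 d) * (\<Sum>i<m. monom 1 (d * i)) + (1 - monom 1 d) * monom 1 (d * m)"
    by (simp add: distrib_left)
  also have "\<dots> = 1 - monom 1 (d * m) + (monom 1 (d * m) - monom 1 (d + d * m))"
    using Suc by (simp add: algebra_simps mult_monom)
  finally show ?case by simp
qed

lemma MS: "d dvd k \<Longrightarrow> M d * S k d = M k"
  unfolding M_def S_def by (simp add: MS_aux)

lemma mod_sum_poly: "(\<Sum>x\<in>A. f x) mod (m :: rat poly) = (\<Sum>x\<in>A. f x mod m)"
  by (induct A rule: infinite_finite_induct) (simp_all add: poly_mod_add_left)

lemma coeff_lift: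
  assumes d: "d > 0" "d dvd k" and r: "r < k"
  shows "coeff ((P * S k d) mod M k) r = coeff (P mod M d) (r mod d)"
proof -
  have k: "k > 0" using r by simp
  define Rd where "Rd = P mod M d"
  have "M k dvd (P * S k d - Rd * S k d)"
  proof -
    have "P - Rd = P div M d * M d" unfolding Rd_def by (simp add: minus_mod_eq_div_mult)
    have "P * S k d - Rd * S k d = (P - Rd) * S k d" by (simp add: algebra_simps)
    also have "\<dots> = P div M d * (M d * S k d)" using \<open>P - Rd = P div M d * M d\<close> by (simp add: mult.assoc)
    finally have "P * S k d - Rd * S k d = P div M d * (M d * S k d)" .
    thus ?thesis using MS[OF d(2)] by simp
  qed
  hence eq: "(P * S k d) mod M k = (Rd * S k d) mod M k" by (simp add: mod_eq_dvd_iff)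
  show ?thesis
  proof (cases "Rd = 0")
    case True thus ?thesis using eq unfolding Rd_def by simp
  next
    case False
    have degR: "degree Rd < d" using degree_mod_less'[OF M_nz[of d]] d False degree_M[of d]
      unfolding Rd_def by simp
    have degS: "degree (S k d) \<le> k - d" unfolding S_def
    proof (intro degree_sum_le)
      fix i assume i: "i \<in> {..<k div d}"
      have "d * i \<le> k - d"
      proof -
        have "i + 1 \<le> k div d" using i by simp
        hence "d * (i + 1) \<le> d * (k div d)" by (rule mult_le_mono2)
        thus ?thesis using d(2) by (simp add: algebra_simps)
      qed
      thus "degree (monom (1::rat) (d * i)) \<le> k - d" by (meson degree_monom_le order.trans)
    qed simp
    have "degree (Rd * S k d) \<le> degree Rd + degree (S k d)" by (rule degree_mult_le)
    also have "\<dots> < k" using degR degS d(2) k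
      by (metis add_le_cancel_left add_less_le_mono dvd_imp_le le_add_diff_inverse)
    finally have "(Rd * S k d) mod M k = Rd * S k d"
      using degree_M[of k] k by (intro mod_poly_less) simp
    hence "coeff ((P * S k d) mod M k) r = coeff (S k d * Rd) r" using eq by (simp add: mult.commute)
    also have "\<dots> = (\<Sum>i<k div d. if r < d * i then 0 else coeff Rd (r - d * i))"
      unfolding S_def sum_distrib_right coeff_sum by (intro sum.cong refl) (simp add: coeff_monom_mult)
    also have "\<dots> = (\<Sum>i<k div d. if i = r div d then coeff Rd (r mod d) else 0)"
    proof (intro sum.cong refl)
      fix i assume i: "i \<in> {..<k div d}"
      consider "i < r div d" | "i = r div d" | "i > r div d" by linarith
      thus "(if r < d * i then 0 else coeff Rd (r - d * i)) = (if i = r div d then coeff Rd (r mod d) else 0)"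
      proof cases
        case 1
        hence "i + 1 \<le> r div d" by simp
        hence "d * (i + 1) \<le> d * (r div d)" by (rule mult_le_mono2)
        also have "\<dots> \<le> r" by simp
        finally have "d \<le> r - d * i" "\<not> r < d * i" by (simp_all add: algebra_simps)
        hence "coeff Rd (r - d * i) = 0" using degR by (intro coeff_eq_0) simp
        thus ?thesis using 1 \<open>\<not> r < d * i\<close> by simp
      next
        case 2
        have "d * (r div d) \<le> r" using div_times_less_eq_dividend[of r d] by (simp only: mult.commute)
        hence "\<not> r < d * (r div d)" by (simp only: not_less)
        moreover have "r - d * (r div d) = r mod d" by (simp add: minus_div_mult_eq_mod[symmetric] mult.commute)
        ultimately show ?thesis using 2 by simp
      next
        case 3
        hence "r div d + 1 \<le> i" by simp
        hence "d * (r div d + 1) \<le> d * i" by (rule mult_le_mono2)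
        moreover have "r < d * (r div d + 1)"
        proof -
          have "r mod d < d" using d(1) by simp
          moreover have "d * (r div d) + r mod d = r" by (rule mult_div_mod_eq)
          moreover have "d * (r div d + 1) = d * (r div d) + d" by simp
          ultimately show ?thesis by linarith
        qed
        ultimately have "r < d * i" by linarith
        thus ?thesis using 3 by simp
      qed
    qed
    also have "\<dots> = coeff Rd (r mod d)"
    proof -
      have "r < (k div d) * d" using r d(2) by simp
      hence "r div d < k div d" by (rule less_mult_imp_div_less)
      thus ?thesis by simp
    qed
    finally show ?thesis unfolding Rd_def .
  qed
qed



lemma Rpoly_M: "Rpoly b n s = smult (1 / (of_nat n) ^ b) (qpoch (n - 1) ^ b * qpoch (s - 1)) mod M n"
  unfolding Rpoly_def M_def ..

lemma nat_mod_sub: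
  assumes "d dvd k" "k > 0"
  shows "nat (t mod int d) = nat (t mod int k) mod d"
proof -
  have "t mod int d = (t mod int k) mod int d" using assms by (simp add: mod_mod_cancel)
  hence "nat (t mod int d) = nat ((t mod int k) mod int d)" by simp
  also have "\<dots> = nat (t mod int k) mod nat (int d)"
    using assms by (intro nat_mod_distrib) auto
  finally show ?thesis by simp
qed

lemma part1:
  fixes k s :: nat and t :: int
  assumes k: "1 \<le> k" and s: "1 \<le> s"
  shows "of_nat k * sigma 0 k t s
           = (\<Sum>d | d dvd k. of_nat d * (if s \<le> d then sigma 1 d t s else 0))"
proof -
  define A where "A = qpoch (s - 1)"
  define r where "r = nat (t mod int k)"
  have kpos: "k > 0" using k by simp
  have rk: "r < k" unfolding r_def using kpos by (simp add: nat_less_iff)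
  have "of_nat k * sigma 0 k t s = coeff (smult (of_nat k) A mod M k) r"
    unfolding sigma_def Rpoly_M A_def r_def by (simp add: mod_smult_left)
  also have "smult (of_nat k) A mod M k = (F k * A) mod M k"
  proof -
    have "F k * A - smult (of_nat k) A = (F k - [:of_nat k:]) * A" by (simp add: algebra_simps)
    hence "M k dvd (F k * A - smult (of_nat k) A)" using L2[OF kpos] by simp
    hence "(F k * A) mod M k = smult (of_nat k) A mod M k" by (simp only: mod_eq_dvd_iff)
    thus ?thesis by simp
  qed
  also have "F k * A = (\<Sum>d | d dvd k. (qpoch (d - 1) * A) * S k d)"
    unfolding F_def sum_distrib_right by (simp add: algebra_simps)
  also have "coeff (\<dots> mod M k) r = (\<Sum>d | d dvd k. coeff (((qpoch (d - 1) * A) * S k d) mod M k) r)"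
    by (simp add: mod_sum_poly coeff_sum)
  also have "\<dots> = (\<Sum>d | d dvd k. of_nat d * (if s \<le> d then sigma 1 d t s else 0))"
  proof (intro sum.cong refl)
    fix d assume "d \<in> {d. d dvd k}"
    hence dk: "d dvd k" by simp
    hence dpos: "d > 0" using kpos by (auto intro: Nat.gr0I)
    have "coeff (((qpoch (d - 1) * A) * S k d) mod M k) r = coeff ((qpoch (d - 1) * A) mod M d) (r mod d)"
      by (rule coeff_lift[OF dpos dk rk])
    also have "r mod d = nat (t mod int d)" unfolding r_def using nat_mod_sub[OF dk kpos] by simp
    also have "coeff ((qpoch (d - 1) * A) mod M d) (nat (t mod int d)) = of_nat d * (if s \<le> d then sigma 1 d t s else 0)"
    proof (cases "s \<le> d")
      case True
      have "sigma 1 d t s = coeff (smult (1 / of_nat d) ((qpoch (d - 1) * A) mod M d)) (nat (t mod int d))"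
        unfolding sigma_def Rpoly_M A_def by (simp add: mod_smult_left)
      thus ?thesis using True dpos by simp
    next
      case False
      have "M d dvd A" unfolding A_def qpoch_def M_def using False dpos
        by (intro dvd_prodI) auto
      hence "(qpoch (d - 1) * A) mod M d = 0" by simp
      thus ?thesis using False by simp
    qed
    finally show "coeff (((qpoch (d - 1) * A) * S k d) mod M k) r = of_nat d * (if s \<le> d then sigma 1 d t s else 0)" .
  qed
  finally show ?thesis .
qed



lemma mu_1: "moebius 1 = 1" unfolding moebius_def by simp

lemma mu_p: assumes p: "prime p" and d: "d > 0" "\<not> p dvd d"
  shows "moebius (p * d) = - moebius d"
proof -
  have cop: "coprime p d" using prime_imp_coprime[OF p d(2)] .
  have sq: "squarefree (p * d) \<longleftrightarrow> squarefree d"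
    using squarefree_multD(2)[of p d] squarefree_mult_coprime[OF cop squarefree_prime[OF p]] by blast
  have pf: "prime_factors (p * d) = insert p (prime_factors d)"
    using p d by (simp add: prime_factors_product prime_prime_factors prime_gt_0_nat)
  have "p \<notin> prime_factors d" using d(2) by auto
  hence card: "card (prime_factors (p * d)) = Suc (card (prime_factors d))" unfolding pf by simp
  show ?thesis unfolding moebius_def using p d sq card by (simp add: prime_gt_0_nat)
qed

lemma mu_sq: assumes "p * p dvd d" "prime (p::nat)" shows "moebius d = 0"
proof -
  have "\<not> squarefree d" using assms unfolding squarefree_def
    by (metis power2_eq_square prime_def not_prime_unit)
  thus ?thesis unfolding moebius_def by simp
qed

lemma moeb_sum:
  assumes n: "n > 0"
  shows "(\<Sum>d | d dvd n. moebius d) = (if n = 1 then 1 else 0)"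
proof (cases "n = 1")
  case True
  have "{d. d dvd n} = {1}" using True by auto
  thus ?thesis using True mu_1 by simp
next
  case False
  then obtain p where p: "prime p" "p dvd n" using prime_factor_nat by blast
  define D where "D = {d. d dvd n}"
  define D1 where "D1 = {d \<in> D. \<not> p dvd d}"
  define D3 where "D3 = {d \<in> D. p * p dvd d}"
  have finD: "finite D" unfolding D_def using n by simp
  have fin1: "finite D1" "finite D3" using finD unfolding D1_def D3_def by auto
  have pos: "p > 0" using p prime_gt_0_nat by blast
  have split: "D = (D1 \<union> (\<lambda>d. p * d) ` D1) \<union> D3"
  proof (intro equalityI subsetI)
    fix d assume d: "d \<in> D"
    show "d \<in> (D1 \<union> (\<lambda>d. p * d) ` D1) \<union> D3"
    proof (cases "p dvd d")
      case False thus ?thesis using d unfolding D1_def by auto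
    next
      case True
      then obtain e where e: "d = p * e" by blast
      show ?thesis
      proof (cases "p dvd e")
        case True thus ?thesis using d e unfolding D3_def by auto
      next
        case False
        have "e dvd n" using d e unfolding D_def by (metis dvd_mult_right mem_Collect_eq)
        thus ?thesis using False e unfolding D1_def D_def by auto
      qed
    qed
  next
    fix d assume "d \<in> (D1 \<union> (\<lambda>d. p * d) ` D1) \<union> D3"
    thus "d \<in> D"
    proof (elim UnE)
      assume "d \<in> (\<lambda>d. p * d) ` D1"
      then obtain e where e: "d = p * e" "e dvd n" "\<not> p dvd e" unfolding D1_def D_def by auto
      have "p * e dvd n" using divides_mult[OF p(2) e(2) prime_imp_coprime[OF p(1) e(3)]] .
      thus ?thesis using e unfolding D_def by simp
    qed (auto simp: D1_def D3_def)
  qed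
  have disj1: "D1 \<inter> (\<lambda>d. p * d) ` D1 = {}" unfolding D1_def by auto
  have disj2: "(D1 \<union> (\<lambda>d. p * d) ` D1) \<inter> D3 = {}"
  proof -
    have "D1 \<inter> D3 = {}" unfolding D1_def D3_def by auto
    moreover have "(\<lambda>d. p * d) ` D1 \<inter> D3 = {}"
    proof (rule ccontr)
      assume "(\<lambda>d. p * d) ` D1 \<inter> D3 \<noteq> {}"
      then obtain e where e: "e \<in> D1" "p * p dvd p * e" unfolding D3_def by blast
      hence "p dvd e" using pos by simp
      thus False using e unfolding D1_def by simp
    qed
    ultimately show ?thesis by blast
  qed
  have inj: "inj_on (\<lambda>d. p * d) D1" using pos by (auto intro: inj_onI)
  have "(\<Sum>d\<in>D. moebius d) = (\<Sum>d\<in>D1. moebius d) + (\<Sum>d\<in>(\<lambda>d. p * d) ` D1. moebius d) + (\<Sum>d\<in>D3. moebius d)"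
    unfolding split using fin1 disj1 disj2 by (simp add: sum.union_disjoint)
  also have "(\<Sum>d\<in>D3. moebius d) = 0" using mu_sq p(1) unfolding D3_def by (intro sum.neutral) auto
  also have "(\<Sum>d\<in>(\<lambda>d. p * d) ` D1. moebius d) = (\<Sum>d\<in>D1. moebius (p * d))"
    using inj by (simp add: sum.reindex)
  also have "\<dots> = (\<Sum>d\<in>D1. - moebius d)"
  proof (intro sum.cong refl)
    fix d assume "d \<in> D1"
    hence "d > 0" "\<not> p dvd d" unfolding D1_def D_def using n by (auto intro: Nat.gr0I)
    thus "moebius (p * d) = - moebius d" using mu_p[OF p(1)] by simp
  qed
  finally show ?thesis using False unfolding D_def by (simp add: sum_negf)
qed



lemma kdd: assumes "(k::nat) > 0" "m dvd k" shows "k div (k div m) = m" "k div m dvd k"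
proof -
  obtain q where q: "k = m * q" using assms by auto
  hence "m > 0" "q > 0" using assms by auto
  thus "k div (k div m) = m" "k div m dvd k" using q by simp_all
qed

lemma moeb_inv:
  fixes f g :: "nat \<Rightarrow> rat"
  assumes k: "k > 0" and g: "\<And>d. d dvd k \<Longrightarrow> g d = (\<Sum>e | e dvd d. f e)"
  shows "(\<Sum>d | d dvd k. of_int (moebius (k div d)) * g d) = f k"
proof -
  define D where "D = {d. d dvd k}"
  have finD: "finite D" unfolding D_def using k by simp
  have "(\<Sum>d | d dvd k. of_int (moebius (k div d)) * g d) = (\<Sum>m\<in>D. of_int (moebius m) * g (k div m))"
    unfolding D_def
  proof (rule sum.reindex_bij_witness[where i = "\<lambda>m. k div m" and j = "\<lambda>d. k div d"])
    fix m assume "m \<in> {d. d dvd k}"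
    then obtain q where q: "k = m * q" by auto
    hence "m > 0" "q > 0" using k by auto
    thus "k div (k div m) = m" using q by simp
  next
    fix m assume "m \<in> {d. d dvd k}"
    then obtain q where q: "k = m * q" by auto
    hence "m > 0" "q > 0" using k by auto
    thus "k div m \<in> {d. d dvd k}" using q by simp
  qed (auto simp: kdd[OF k])
  also have "\<dots> = (\<Sum>m\<in>D. \<Sum>e\<in>D. if m * e dvd k then of_int (moebius m) * f e else 0)"
  proof (intro sum.cong refl)
    fix m assume m: "m \<in> D"
    hence mpos: "m > 0" using k unfolding D_def by (auto intro: Nat.gr0I)
    have mk: "m dvd k" using m unfolding D_def by simp
    have set: "{e. e dvd k div m} = {e \<in> D. m * e dvd k}"
      unfolding D_def using mpos mk by (auto simp: dvd_div_iff_mult mult.commute intro: dvd_mult_left)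
    have "g (k div m) = (\<Sum>e\<in>{e \<in> D. m * e dvd k}. f e)"
      using g[OF kdd(2)[OF k mk]] set by simp
    also have "\<dots> = (\<Sum>e\<in>D. if m * e dvd k then f e else 0)" using finD by (simp add: sum.inter_filter)
    finally show "of_int (moebius m) * g (k div m) = (\<Sum>e\<in>D. if m * e dvd k then of_int (moebius m) * f e else 0)"
      by (auto simp: sum_distrib_left intro!: sum.cong)
  qed
  also have "\<dots> = (\<Sum>e\<in>D. \<Sum>m\<in>D. if m * e dvd k then of_int (moebius m) * f e else 0)"
    by (rule sum.swap)
  also have "\<dots> = (\<Sum>e\<in>D. if e = k then f e else 0)"
  proof (intro sum.cong refl)
    fix e assume e: "e \<in> D"
    hence epos: "e > 0" using k unfolding D_def by (auto intro: Nat.gr0I)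
    have ek: "e dvd k" using e unfolding D_def by simp
    have set: "{m. m dvd k div e} = {m \<in> D. m * e dvd k}"
      unfolding D_def using epos ek by (auto simp: dvd_div_iff_mult intro: dvd_mult_left)
    have "(\<Sum>m\<in>D. if m * e dvd k then of_int (moebius m) * f e else 0)
        = (\<Sum>m\<in>{m \<in> D. m * e dvd k}. of_int (moebius m)) * f e"
      using finD by (auto simp: sum.inter_filter sum_distrib_right intro!: sum.cong)
    also have "\<dots> = of_int (\<Sum>m | m dvd k div e. moebius m) * f e" unfolding set[symmetric] by simp
    also have "\<dots> = (if e = k then f e else 0)"
    proof -
      have "k div e > 0" using ek k epos by (metis div_greater_zero_iff dvd_imp_le)
      moreover have "k div e = 1 \<longleftrightarrow> e = k" using ek k epos
        by (metis div_self dvd_mult_div_cancel mult.right_neutral neq0_conv)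
      ultimately show ?thesis using moeb_sum[of "k div e"] by simp
    qed
    finally show "(\<Sum>m\<in>D. if m * e dvd k then of_int (moebius m) * f e else 0) = (if e = k then f e else 0)" .
  qed
  also have "\<dots> = f k" using finD unfolding D_def by (simp add: sum.delta)
  finally show ?thesis .
qed

theorem proposition2p11:
  fixes k s :: nat and t :: int
  assumes "1 \<le> k" and "1 \<le> s" and "s \<le> k"
  shows "of_nat k * sigma 0 k t s
           = (\<Sum>d | d dvd k. of_nat d * (if s \<le> d then sigma 1 d t s else 0))
       \<and> of_nat k * sigma 1 k t s
           = (\<Sum>d | d dvd k. of_int (moebius (k div d)) * of_nat d * (if s \<le> d then sigma 0 d t s else 0))"
proof
  show "of_nat k * sigma 0 k t s
           = (\<Sum>d | d dvd k. of_nat d * (if s \<le> d then sigma 1 d t s else 0))"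
    using part1 assms by simp
  define f where "f d = of_nat d * (if s \<le> d then sigma 1 d t s else 0)" for d
  define g where "g d = of_nat d * (if s \<le> d then sigma 0 d t s else 0)" for d
  have kpos: "k > 0" using assms by simp
  have gf: "g d = (\<Sum>e | e dvd d. f e)" if d: "d dvd k" for d
  proof -
    have dpos: "d > 0" using d kpos by (auto intro: Nat.gr0I)
    show ?thesis
    proof (cases "s \<le> d")
      case True
      thus ?thesis unfolding g_def f_def using part1[of d s t] dpos assms by simp
    next
      case False
      have "f e = 0" if "e dvd d" for e
      proof -
        have "e \<le> d" using that dpos by (rule dvd_imp_le)
        thus ?thesis unfolding f_def using False by simp
      qed
      thus ?thesis unfolding g_def using False by simp
    qed
  qed
  have "(\<Sum>d | d dvd k. of_int (moebius (k div d)) * g d) = f k" by (rule moeb_inv[OF kpos gf])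
  thus "of_nat k * sigma 1 k t s
           = (\<Sum>d | d dvd k. of_int (moebius (k div d)) * of_nat d * (if s \<le> d then sigma 0 d t s else 0))"
    unfolding f_def g_def using assms by (simp add: mult.assoc)
qed


end
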